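(* There is a function $f(\Delta)=O(\Delta^{4/3})$ (as $\Delta\to\infty$) such that every graph $G$ with maximum degree $\Delta\ge 3$ satisfies $\pi'_l(G)\le \Delta^2 + 2^{4/3}\Delta^{5/3} + f(\Delta)$.
   Context: An edge-coloring is non-repetitive if for every path with an even number $2j$ of edges $e_1,\dots,e_{2j}$ (in order along the path), the color sequence $(c(e_1),\dots,c(e_j))$ differs from $(c(e_{j+1}),\dots,c(e_{2j}))$. $\pi'_l(G)$, the Thue choice index, is the minimum $k$ such that for every assignment of lists of size at least $k$ to the edges, $G$ has a non-repetitive edge-coloring in which every edge receives a color from its list. *)

theory Defs
  imports Complex_Main "HOL-Library.Landau_Symbols"
begin

definition simple_graph :: "'a set \<Rightarrow> 'a set set \<Rightarrow> bool" where
  "simple_graph V E \<longleftrightarrow> finite V \<and> (\<forall>e\<in>E. e \<subseteq> V \<and> card e = 2)"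

definition degree :: "'a set set \<Rightarrow> 'a \<Rightarrow> nat" where
  "degree E v = card {e \<in> E. v \<in> e}"

definition max_degree :: "'a set \<Rightarrow> 'a set set \<Rightarrow> nat" where
  "max_degree V E = Max (insert 0 (degree E ` V))"

definition is_path :: "'a set set \<Rightarrow> 'a list \<Rightarrow> bool" where
  "is_path E vs \<longleftrightarrow> vs \<noteq> [] \<and> distinct vs \<and>
     (\<forall>i. Suc i < length vs \<longrightarrow> {vs ! i, vs ! Suc i} \<in> E)"

definition path_edges :: "'a list \<Rightarrow> 'a set list" where
  "path_edges vs = map (\<lambda>i. {vs ! i, vs ! Suc i}) [0..<length vs - 1]"

definition nonrepetitive :: "'a set set \<Rightarrow> ('a set \<Rightarrow> 'c) \<Rightarrow> bool" where
  "nonrepetitive E c \<longleftrightarrow>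
     (\<forall>vs j. is_path E vs \<longrightarrow> j \<ge> 1 \<longrightarrow> length (path_edges vs) = 2 * j \<longrightarrow>
        map c (take j (path_edges vs)) \<noteq> map c (drop j (path_edges vs)))"

definition thue_choosable :: "'a set set \<Rightarrow> nat \<Rightarrow> bool" where
  "thue_choosable E k \<longleftrightarrow>
     (\<forall>L :: 'a set \<Rightarrow> nat set. (\<forall>e\<in>E. infinite (L e) \<or> k \<le> card (L e)) \<longrightarrow>
        (\<exists>c. (\<forall>e\<in>E. c e \<in> L e) \<and> nonrepetitive E c))"

definition thue_choice_index :: "'a set set \<Rightarrow> nat" where
  "thue_choice_index E = (LEAST k. thue_choosable E k)"

end

theory Submission
  imports Defs "HOL-Library.FuncSet"
begin


lemma pe_length[simp]: "length (path_edges vs) = length vs - 1"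
  by (simp add: path_edges_def)

lemma pe_nth: "i < length vs - 1 \<Longrightarrow> path_edges vs ! i = {vs!i, vs!Suc i}"
  by (simp add: path_edges_def)

lemma is_path_alt: "is_path E vs \<longleftrightarrow> vs \<noteq> [] \<and> distinct vs \<and> set (path_edges vs) \<subseteq> E"
proof -
  have key: "(\<forall>i. Suc i < length vs \<longrightarrow> {vs ! i, vs ! Suc i} \<in> E) \<longleftrightarrow> set (path_edges vs) \<subseteq> E"
  proof (intro iffI subsetI allI impI)
    fix x assume h: "\<forall>i. Suc i < length vs \<longrightarrow> {vs ! i, vs ! Suc i} \<in> E" and x: "x \<in> set (path_edges vs)"
    then obtain i where i: "i < length (path_edges vs)" "x = path_edges vs ! i" by (auto simp: in_set_conv_nth)
    hence "Suc i < length vs" by simp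
    thus "x \<in> E" using h i pe_nth[of i vs] by simp
  next
    fix i assume h: "set (path_edges vs) \<subseteq> E" and i: "Suc i < length vs"
    hence i2: "i < length (path_edges vs)" by simp
    hence "path_edges vs ! i \<in> E" using h nth_mem by blast
    thus "{vs ! i, vs ! Suc i} \<in> E" using i2 pe_nth[of i vs] by simp
  qed
  show ?thesis by (simp only: is_path_def key)
qed

lemma pe_rev: "path_edges (rev vs) = rev (path_edges vs)"
proof (rule nth_equalityI)
  fix i assume "i < length (path_edges (rev vs))"
  hence i: "Suc i < length vs" by simp
  have "path_edges (rev vs) ! i = {rev vs ! i, rev vs ! Suc i}" using i by (intro pe_nth) simp
  also have "\<dots> = {vs ! (length vs - Suc i), vs ! (length vs - Suc (Suc i))}"
    using i by (simp add: rev_nth)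
  also have "\<dots> = path_edges vs ! (length vs - Suc (Suc i))"
  proof -
    have 1: "length vs - Suc (Suc i) < length vs - 1" using i by linarith
    have 2: "Suc (length vs - Suc (Suc i)) = length vs - Suc i" using i by linarith
    have "path_edges vs ! (length vs - Suc (Suc i)) = {vs ! (length vs - Suc (Suc i)), vs ! Suc (length vs - Suc (Suc i))}"
      by (rule pe_nth[OF 1])
    also have "\<dots> = {vs ! (length vs - Suc (Suc i)), vs ! (length vs - Suc i)}" by (simp only: 2)
    finally show ?thesis by (simp only: insert_commute)
  qed
  also have "\<dots> = rev (path_edges vs) ! i" using i by (simp add: rev_nth)
  finally show "path_edges (rev vs) ! i = rev (path_edges vs) ! i" .
qed simp

lemma pe_take: "path_edges (take (Suc i) vs) = take i (path_edges vs)"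
proof (rule nth_equalityI)
  fix a assume "a < length (path_edges (take (Suc i) vs))"
  hence a: "a < i" "Suc a < length vs" by auto
  have "path_edges (take (Suc i) vs) ! a = {take (Suc i) vs ! a, take (Suc i) vs ! Suc a}"
    using a by (intro pe_nth) simp
  also have "\<dots> = {vs ! a, vs ! Suc a}" using a by simp
  also have "\<dots> = path_edges vs ! a" using a by (simp add: pe_nth)
  finally show "path_edges (take (Suc i) vs) ! a = take i (path_edges vs) ! a" using a by simp
qed (simp add: min_def; linarith)

lemma pe_drop: "path_edges (drop i vs) = drop i (path_edges vs)"
proof (rule nth_equalityI)
  fix a assume "a < length (path_edges (drop i vs))"
  hence a: "i + Suc a < length vs" by auto
  have "path_edges (drop i vs) ! a = {drop i vs ! a, drop i vs ! Suc a}"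
    using a by (intro pe_nth) simp
  also have "\<dots> = {vs ! (i + a), vs ! Suc (i + a)}" using a by simp
  also have "\<dots> = path_edges vs ! (i + a)" using a by (intro pe_nth[symmetric]) simp
  finally show "path_edges (drop i vs) ! a = drop i (path_edges vs) ! a" using a by simp
qed simp

lemma pe_Cons: "path_edges (x # y # ys) = {x,y} # path_edges (y # ys)"
  by (rule nth_equalityI) (auto simp: pe_nth nth_Cons split: nat.splits)

lemma pe_distinct: "distinct vs \<Longrightarrow> distinct (path_edges vs)"
proof -
  assume d: "distinct vs"
  show ?thesis unfolding distinct_conv_nth
  proof (intro allI impI)
    fix i i' assume a: "i < length (path_edges vs)" "i' < length (path_edges vs)" "i \<noteq> i'"
    show "path_edges vs ! i \<noteq> path_edges vs ! i'"
    proof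
      assume "path_edges vs ! i = path_edges vs ! i'"
      hence eq: "{vs!i, vs!Suc i} = {vs!i', vs!Suc i'}" using a by (simp add: pe_nth)
      have "vs!i = vs!i' \<or> vs!i = vs!Suc i'" using eq by auto
      have "vs!Suc i = vs!i' \<or> vs!Suc i = vs!Suc i'" using eq by auto
      have l: "i < length vs" "Suc i < length vs" "i' < length vs" "Suc i' < length vs" using a by auto
      have "vs!i \<noteq> vs!i'" using l d a(3) by (simp add: nth_eq_iff_index_eq)
      moreover have "vs!Suc i \<noteq> vs!Suc i'" using l d a(3) by (simp add: nth_eq_iff_index_eq)
      ultimately have "vs!i = vs!Suc i'" "vs!Suc i = vs!i'" using \<open>vs!i = vs!i' \<or> vs!i = vs!Suc i'\<close> \<open>vs!Suc i = vs!i' \<or> vs!Suc i = vs!Suc i'\<close> by auto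
      hence "i = Suc i'" "Suc i = i'" using l d by (simp_all add: nth_eq_iff_index_eq)
      thus False by simp
    qed
  qed
qed

lemma path_mono: "is_path F vs \<Longrightarrow> F \<subseteq> G \<Longrightarrow> is_path G vs"
  by (auto simp: is_path_alt)

lemma nonrep_mono: "nonrepetitive G c \<Longrightarrow> F \<subseteq> G \<Longrightarrow> nonrepetitive F c"
  unfolding nonrepetitive_def using path_mono by blast

lemma nonrep_cong: "(\<And>x. x \<in> F \<Longrightarrow> c x = d x) \<Longrightarrow> nonrepetitive F c \<Longrightarrow> nonrepetitive F d"
proof (unfold nonrepetitive_def, intro allI impI)
  fix vs j assume cd: "\<And>x. x \<in> F \<Longrightarrow> c x = d x"
    and nr: "\<forall>vs j. is_path F vs \<longrightarrow> 1 \<le> j \<longrightarrow> length (path_edges vs) = 2 * j \<longrightarrow>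
       map c (take j (path_edges vs)) \<noteq> map c (drop j (path_edges vs))"
    and p: "is_path F vs" "1 \<le> j" "length (path_edges vs) = 2 * j"
  have s: "set (path_edges vs) \<subseteq> F" using p by (simp add: is_path_alt)
  have "map c (take j (path_edges vs)) = map d (take j (path_edges vs))"
    using s cd by (intro map_cong) (auto dest: in_set_takeD)
  moreover have "map c (drop j (path_edges vs)) = map d (drop j (path_edges vs))"
    using s cd by (intro map_cong) (auto dest: in_set_dropD)
  moreover have "map c (take j (path_edges vs)) \<noteq> map c (drop j (path_edges vs))"
    using nr p by blast
  ultimately show "map d (take j (path_edges vs)) \<noteq> map d (drop j (path_edges vs))"
    by argo
qed

lemma nonrep_empty: "nonrepetitive {} c"
  by (auto simp: nonrepetitive_def is_path_alt)

lemma square_rev: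
  assumes "length xs = 2*j" "map c (take j xs) = map c (drop j xs)"
  shows "map c (take j (rev xs)) = map c (drop j (rev xs))"
  using assms by (simp add: take_rev drop_rev rev_map[symmetric])



definition walks :: "'a set set \<Rightarrow> 'a \<Rightarrow> nat \<Rightarrow> 'a list set" where
  "walks G w m = {ws. length ws = Suc m \<and> hd ws = w \<and> set (path_edges ws) \<subseteq> G}"

lemma walks_card:
  assumes nb: "\<And>x. finite {y. {x,y} \<in> G} \<and> card {y. {x,y} \<in> G} \<le> D"
  shows "finite (walks G w m) \<and> card (walks G w m) \<le> D ^ m"
proof (induction m arbitrary: w)
  case 0
  have "walks G w 0 = {[w]}"
  proof (intro equalityI subsetI)
    fix ws assume "ws \<in> walks G w 0"
    thus "ws \<in> {[w]}" by (auto simp: walks_def length_Suc_conv)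
  next
    fix ws assume "ws \<in> {[w]}"
    thus "ws \<in> walks G w 0" by (simp add: walks_def path_edges_def)
  qed
  thus ?case by simp
next
  case (Suc m)
  define N where "N = {y. {w,y} \<in> G}"
  have sub: "walks G w (Suc m) \<subseteq> (\<lambda>(x,ws). w # ws) ` (SIGMA x:N. walks G x m)"
  proof
    fix ws assume ws: "ws \<in> walks G w (Suc m)"
    then obtain a b rest where ws_eq: "ws = a # b # rest" "length rest = m"
      by (auto simp: walks_def length_Suc_conv)
    have a: "a = w" using ws ws_eq by (simp add: walks_def)
    have pe: "set (path_edges ws) \<subseteq> G" using ws by (simp add: walks_def)
    hence "{a,b} \<in> G" "set (path_edges (b # rest)) \<subseteq> G" using ws_eq by (simp_all add: pe_Cons)
    hence "b \<in> N" "b # rest \<in> walks G b m" using a ws_eq by (simp_all add: N_def walks_def)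
    thus "ws \<in> (\<lambda>(x,ws). w # ws) ` (SIGMA x:N. walks G x m)"
      using a ws_eq by (intro image_eqI[where x="(b, b # rest)"]) auto
  qed
  have fN: "finite N" "card N \<le> D" using nb[of w] by (simp_all add: N_def)
  have fS: "finite (SIGMA x:N. walks G x m)" using fN Suc.IH by (intro finite_SigmaI) auto
  have "card (SIGMA x:N. walks G x m) = (\<Sum>x\<in>N. card (walks G x m))"
    using fN Suc.IH by (intro card_SigmaI) auto
  also have "\<dots> \<le> (\<Sum>x\<in>N. D ^ m)" using Suc.IH by (intro sum_mono) auto
  also have "\<dots> = card N * D ^ m" by simp
  also have "\<dots> \<le> D * D ^ m" using fN by (intro mult_right_mono) auto
  finally have cS: "card (SIGMA x:N. walks G x m) \<le> D ^ Suc m" by simp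
  have "finite (walks G w (Suc m))" using sub fS by (meson finite_imageI finite_subset)
  moreover have "card (walks G w (Suc m)) \<le> D ^ Suc m"
    using card_mono[OF finite_imageI[OF fS] sub] card_image_le[OF fS, of "\<lambda>(x,ws). w # ws"] cS
    by linarith
  ultimately show ?case by blast
qed

definition paths_at :: "'a set set \<Rightarrow> 'a \<Rightarrow> 'a \<Rightarrow> nat \<Rightarrow> 'a list set" where
  "paths_at G u v n = {vs. is_path G vs \<and> length vs = n \<and> (\<exists>i. Suc i < n \<and> vs!i = u \<and> vs!Suc i = v)}"

lemma paths_at_i_card:
  assumes nb: "\<And>x. finite {y. {x,y} \<in> G} \<and> card {y. {x,y} \<in> G} \<le> D"
    and i: "Suc i < n"
  shows "finite {vs. is_path G vs \<and> length vs = n \<and> vs!i = u \<and> vs!Suc i = v} \<and>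
         card {vs. is_path G vs \<and> length vs = n \<and> vs!i = u \<and> vs!Suc i = v} \<le> D ^ (n - 2)"
proof -
  define A where "A = {vs. is_path G vs \<and> length vs = n \<and> vs!i = u \<and> vs!Suc i = v}"
  define h where "h = (\<lambda>vs::'a list. (rev (take (Suc i) vs), drop (Suc i) vs))"
  define B where "B = walks G u i \<times> walks G v (n - Suc (Suc i))"
  have inj: "inj_on h A"
  proof (rule inj_onI)
    fix x y assume "h x = h y"
    hence "take (Suc i) x = take (Suc i) y" "drop (Suc i) x = drop (Suc i) y" by (simp_all add: h_def)
    thus "x = y" by (metis append_take_drop_id)
  qed
  have img: "h ` A \<subseteq> B"
  proof
    fix p assume "p \<in> h ` A"
    then obtain vs where vs: "vs \<in> A" "p = h vs" by blast
    have l: "length vs = n" and pe: "set (path_edges vs) \<subseteq> G" and u: "vs ! i = u" and v: "vs ! Suc i = v"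
      using vs by (auto simp: A_def is_path_alt)
    have ne: "take (Suc i) vs \<noteq> []" using l i by (metis Zero_not_Suc le_less_trans length_0_conv less_imp_le_nat less_nat_zero_code take_eq_Nil)
    have lt: "length (take (Suc i) vs) = Suc i" using l i by simp
    have "hd (rev (take (Suc i) vs)) = take (Suc i) vs ! i"
      using ne lt by (simp add: hd_rev last_conv_nth)
    hence "hd (rev (take (Suc i) vs)) = u" using u by simp
    moreover have "set (path_edges (rev (take (Suc i) vs))) \<subseteq> G"
      using pe by (simp add: pe_rev pe_take) (meson in_set_takeD subsetD subsetI)
    moreover have "hd (drop (Suc i) vs) = v" using l i v by (simp add: hd_drop_conv_nth)
    moreover have "set (path_edges (drop (Suc i) vs)) \<subseteq> G"
      using pe by (simp add: pe_drop) (meson in_set_dropD subsetD subsetI)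
    moreover have "length (rev (take (Suc i) vs)) = Suc i" using l i by simp
    moreover have "length (drop (Suc i) vs) = Suc (n - Suc (Suc i))" using l i by simp
    ultimately show "p \<in> B" using vs(2) by (simp add: B_def walks_def h_def)
  qed
  have fB: "finite B" and cB: "card B \<le> D ^ i * D ^ (n - Suc (Suc i))"
    using walks_card[OF nb, of u i] walks_card[OF nb, of v "n - Suc (Suc i)"]
    by (auto simp: B_def card_cartesian_product intro: mult_le_mono)
  have "finite A" using inj img fB by (meson finite_imageD finite_subset)
  moreover have "card A \<le> card B" using card_inj_on_le[OF inj img fB] .
  moreover have "D ^ i * D ^ (n - Suc (Suc i)) = D ^ (n - 2)"
    using i by (simp add: power_add[symmetric])
  ultimately show ?thesis using cB by (simp add: A_def)
qed

lemma paths_at_card: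
  assumes nb: "\<And>x. finite {y. {x,y} \<in> G} \<and> card {y. {x,y} \<in> G} \<le> D"
  shows "finite (paths_at G u v n) \<and> card (paths_at G u v n) \<le> (n - 1) * D ^ (n - 2)"
proof -
  have eq: "paths_at G u v n = (\<Union>i\<in>{..<n-1}. {vs. is_path G vs \<and> length vs = n \<and> vs!i = u \<and> vs!Suc i = v})"
    by (auto simp: paths_at_def less_diff_conv)
  have f: "\<And>i. i \<in> {..<n-1} \<Longrightarrow> finite {vs. is_path G vs \<and> length vs = n \<and> vs!i = u \<and> vs!Suc i = v} \<and>
         card {vs. is_path G vs \<and> length vs = n \<and> vs!i = u \<and> vs!Suc i = v} \<le> D ^ (n - 2)"
    using paths_at_i_card[OF nb] by (simp add: less_diff_conv)
  have "finite (paths_at G u v n)" unfolding eq using f by blast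
  moreover have "card (paths_at G u v n) \<le> (\<Sum>i\<in>{..<n-1}. card {vs. is_path G vs \<and> length vs = n \<and> vs!i = u \<and> vs!Suc i = v})"
    unfolding eq by (rule card_UN_le) simp
  moreover have "\<dots> \<le> (\<Sum>i\<in>{..<n-1}. D ^ (n - 2))" using f by (intro sum_mono) blast
  ultimately show ?thesis by simp
qed



lemma sum_jy:
  fixes y :: real
  assumes y: "0 \<le> y" "y < 1"
  shows "(\<Sum>j\<in>{1..K}. real j * y ^ (j - 1)) \<le> 1 / (1 - y)^2"
proof -
  have closed: "(\<Sum>j\<in>{1..K}. real j * y ^ (j - 1)) * (1 - y)^2 = 1 - (real K + 1) * y ^ K + real K * y ^ (K + 1)" for K
  proof (induction K)
    case 0 thus ?case by simp
  next
    case (Suc K)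
    have "(\<Sum>j\<in>{1..Suc K}. real j * y ^ (j - 1)) = (\<Sum>j\<in>{1..K}. real j * y ^ (j - 1)) + real (Suc K) * y ^ K"
      by simp
    hence "(\<Sum>j\<in>{1..Suc K}. real j * y ^ (j - 1)) * (1 - y)^2
        = 1 - (real K + 1) * y ^ K + real K * y ^ (K + 1) + real (Suc K) * y ^ K * (1 - y)^2"
      using Suc.IH by (simp add: distrib_right)
    also have "\<dots> = 1 - (real (Suc K) + 1) * y ^ Suc K + real (Suc K) * y ^ (Suc K + 1)"
      by (simp add: power2_eq_square algebra_simps)
    finally show ?case .
  qed
  have pos: "0 < (1 - y)^2" using y by simp
  have "real K * y ^ (K + 1) \<le> (real K + 1) * y ^ K"
  proof -
    have "real K * y ^ (K + 1) = (real K * y) * y ^ K" by simp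
    also have "\<dots> \<le> (real K + 1) * y ^ K"
    proof (intro mult_right_mono)
      have "real K * y \<le> real K" using y by (intro mult_left_le) auto
      thus "real K * y \<le> real K + 1" by linarith
    qed (use y in simp)
    finally show ?thesis .
  qed
  hence "(\<Sum>j\<in>{1..K}. real j * y ^ (j - 1)) * (1 - y)^2 \<le> 1" using closed[of K] by linarith
  thus ?thesis using pos by (simp add: field_simps)
qed

locale tc =
  fixes V :: "'a set" and E :: "'a set set" and L :: "'a set \<Rightarrow> nat set"
    and D :: nat and k :: nat and \<beta> :: real
  assumes sg: "simple_graph V E"
  and deg: "\<And>v. v \<in> V \<Longrightarrow> degree E v \<le> D"
  and Lfin: "\<And>e. e \<in> E \<Longrightarrow> finite (L e) \<and> k \<le> card (L e)"
  and bpos: "real D ^ 2 < \<beta>"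
  and kb: "\<beta> + 2 * real D / (1 - real D ^ 2 / \<beta>) ^ 2 \<le> real k"
begin

lemma finV: "finite V" using sg by (simp add: simple_graph_def)
lemma Esub: "e \<in> E \<Longrightarrow> e \<subseteq> V \<and> card e = 2" using sg by (simp add: simple_graph_def)
lemma finE: "finite E"
proof -
  have "E \<subseteq> Pow V" using Esub by blast
  thus ?thesis using finV by (meson finite_Pow_iff finite_subset)
qed

lemma beta_pos: "0 < \<beta>" using bpos by (smt (verit) zero_le_power2)

lemma nb: assumes "G \<subseteq> E" shows "finite {y. {x,y} \<in> G} \<and> card {y. {x,y} \<in> G} \<le> D"
proof (cases "x \<in> V")
  case False
  have "{y. {x,y} \<in> G} = {}" using False assms Esub by blast
  thus ?thesis by simp
next
  case True
  have sub: "{y. {x,y} \<in> G} \<subseteq> V" using assms Esub by blast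
  have inj: "inj_on (\<lambda>y. {x,y}) {y. {x,y} \<in> G}" by (rule inj_onI) (auto simp: doubleton_eq_iff)
  have img: "(\<lambda>y. {x,y}) ` {y. {x,y} \<in> G} \<subseteq> {e \<in> E. x \<in> e}" using assms by auto
  have "finite {e \<in> E. x \<in> e}" using finE by simp
  hence "card {y. {x,y} \<in> G} \<le> card {e \<in> E. x \<in> e}" using card_inj_on_le[OF inj img] by blast
  also have "\<dots> = degree E x" by (simp add: degree_def)
  also have "\<dots> \<le> D" using deg True by blast
  finally show ?thesis using sub finV finite_subset by blast
qed

definition col :: "'a set set \<Rightarrow> ('a set \<Rightarrow> nat) set" where
  "col F = {c \<in> PiE F L. nonrepetitive F c}"

definition N :: "'a set set \<Rightarrow> nat" where "N F = card (col F)"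

lemma finPiE: "F \<subseteq> E \<Longrightarrow> finite (PiE F L)"
  using finE Lfin by (intro finite_PiE) (auto intro: finite_subset)

lemma fincol: "F \<subseteq> E \<Longrightarrow> finite (col F)"
  using finPiE by (simp add: col_def)

lemma S_lemma:
  assumes IH: "\<And>F' e'. F' \<subseteq> E \<Longrightarrow> card F' < card F \<Longrightarrow> e' \<in> E \<Longrightarrow> e' \<notin> F' \<Longrightarrow> \<beta> * real (N F') \<le> real (N (insert e' F'))"
    and F: "F \<subseteq> E"
  shows "finite S \<Longrightarrow> S \<subseteq> F \<Longrightarrow> real (N (F - S)) * \<beta> ^ card S \<le> real (N F)"
proof (induction S rule: finite_induct)
  case empty thus ?case by simp
next
  case (insert s S)
  have fF: "finite F" using F finE finite_subset by blast
  have s: "s \<in> F" using insert by blast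
  have "card (F - insert s S) < card F" using fF s by (intro psubset_card_mono) auto
  moreover have "F - insert s S \<subseteq> E" using F by blast
  ultimately have "\<beta> * real (N (F - insert s S)) \<le> real (N (insert s (F - insert s S)))"
    using IH s F by blast
  also have "insert s (F - insert s S) = F - S" using s insert.hyps(2) by blast
  finally have 1: "\<beta> * real (N (F - insert s S)) \<le> real (N (F - S))" .
  have "real (N (F - insert s S)) * \<beta> ^ card (insert s S) = (\<beta> * real (N (F - insert s S))) * \<beta> ^ card S"
    using insert.hyps by simp
  also have "\<dots> \<le> real (N (F - S)) * \<beta> ^ card S"
    using 1 beta_pos by (intro mult_right_mono) auto
  also have "\<dots> \<le> real (N F)" using insert by blast
  finally show ?case .
qed

end


lemma square_nth:
  assumes l: "length xs = 2*j" and sq: "map c (take j xs) = map c (drop j xs)" and t: "t < j"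
  shows "c (xs ! t) = c (xs ! (j + t))"
proof -
  have "map c (take j xs) ! t = map c (drop j xs) ! t" using sq by simp
  moreover have "map c (take j xs) ! t = c (xs ! t)" using l t by simp
  moreover have "map c (drop j xs) ! t = c (xs ! (j + t))" using l t by simp
  ultimately show ?thesis by simp
qed

context tc begin

lemma Bvs_card:
  assumes F: "F \<subseteq> E" and e: "e \<in> E" "e \<notin> F" and p: "is_path (insert e F) vs"
   and l: "length (path_edges vs) = 2*j" and et: "e \<in> set (take j (path_edges vs))"
  shows "card {c \<in> PiE (insert e F) L. nonrepetitive F c \<and> map c (take j (path_edges vs)) = map c (drop j (path_edges vs))}
           \<le> N (F - (set (take j (path_edges vs)) - {e}))"
    and "card (set (take j (path_edges vs)) - {e}) = j - 1"
    and "set (take j (path_edges vs)) - {e} \<subseteq> F"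
proof -
  define pe where "pe = path_edges vs"
  define H where "H = set (take j pe)"
  define S where "S = H - {e}"
  define B where "B = {c \<in> PiE (insert e F) L. nonrepetitive F c \<and> map c (take j pe) = map c (drop j pe)}"
  have dist: "distinct pe" using p pe_distinct by (auto simp: is_path_alt pe_def)
  have spe: "set pe \<subseteq> insert e F" using p by (simp add: is_path_alt pe_def)
  have lpe: "length pe = 2*j" using l by (simp add: pe_def)
  have eH: "e \<in> H" using et by (simp add: H_def pe_def)
  have cH: "card H = j" unfolding H_def using dist lpe by (simp add: distinct_card)
  show "card (set (take j (path_edges vs)) - {e}) = j - 1"
    using cH eH by (simp add: H_def pe_def)
  have HG: "H \<subseteq> insert e F" using spe by (auto simp: H_def dest: in_set_takeD)
  show SF: "set (take j (path_edges vs)) - {e} \<subseteq> F" using HG by (auto simp: H_def pe_def)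
  have GH: "insert e F - H = F - S" using eH e(2) by (auto simp: S_def)
  define r where "r = (\<lambda>c::'a set \<Rightarrow> nat. restrict c (F - S))"
  have inj: "inj_on r B"
  proof (rule inj_onI)
    fix c d assume c: "c \<in> B" and d: "d \<in> B" and rcd: "r c = r d"
    have rr: "\<And>x. x \<in> F - S \<Longrightarrow> c x = d x"
    proof -
      fix x assume x: "x \<in> F - S"
      have "c x = r c x" using x by (simp add: r_def)
      also have "\<dots> = r d x" by (simp only: rcd)
      also have "\<dots> = d x" using x by (simp add: r_def)
      finally show "c x = d x" .
    qed
    have cP: "c \<in> PiE (insert e F) L" and cs: "map c (take j pe) = map c (drop j pe)"
      using c unfolding B_def by blast+
    have dP: "d \<in> PiE (insert e F) L" and ds: "map d (take j pe) = map d (drop j pe)"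
      using d unfolding B_def by blast+
    show "c = d"
    proof
      fix x
      show "c x = d x"
      proof (cases "x \<in> insert e F")
        case False
        have "c x = undefined" by (rule PiE_arb[OF cP False])
        moreover have "d x = undefined" by (rule PiE_arb[OF dP False])
        ultimately show ?thesis by simp
      next
        case True
        show ?thesis
        proof (cases "x \<in> H")
          case False
          have "x \<in> insert e F - H" using True False by blast
          hence "x \<in> F - S" using GH by simp
          thus ?thesis by (rule rr)
        next
          case xH: True
          then obtain t where t0: "t < length (take j pe)" "take j pe ! t = x"
            unfolding H_def in_set_conv_nth by blast
          have t: "t < j" "x = pe ! t" using t0 lpe by simp_all
          have jt: "j + t < length pe" using t lpe by simp
          have "pe ! (j + t) \<in> insert e F" using spe jt nth_mem by blast
          moreover have "pe ! (j + t) \<notin> H"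
          proof
            assume "pe ! (j + t) \<in> H"
            then obtain t' where t'0: "t' < length (take j pe)" "take j pe ! t' = pe ! (j + t)"
              unfolding H_def in_set_conv_nth by blast
            have t': "t' < j" "pe ! t' = pe ! (j + t)" using t'0 lpe by simp_all
            have "t' < length pe" using t' lpe by simp
            hence "t' = j + t" using dist jt t'(2) by (simp add: nth_eq_iff_index_eq)
            thus False using t' by simp
          qed
          ultimately have "pe ! (j + t) \<in> insert e F - H" by blast
          hence mem: "pe ! (j + t) \<in> F - S" using GH by simp
          have "c x = c (pe ! (j + t))" using square_nth[OF lpe cs t(1)] t(2) by simp
          also have "\<dots> = d (pe ! (j + t))" using mem by (rule rr)
          also have "\<dots> = d x" using square_nth[OF lpe ds t(1)] t(2) by simp
          finally show ?thesis .
        qed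
      qed
    qed
  qed
  have img: "r ` B \<subseteq> col (F - S)"
  proof
    fix z assume "z \<in> r ` B"
    then obtain c where c: "c \<in> B" "z = r c" by blast
    have cB: "c \<in> PiE (insert e F) L" "nonrepetitive F c" using c(1) unfolding B_def by blast+
    have "\<forall>i \<in> F - S. c i \<in> L i" using PiE_mem[OF cB(1)] by blast
    hence "z \<in> PiE (F - S) L" unfolding c(2) r_def by (simp only: restrict_PiE_iff)
    moreover have "nonrepetitive (F - S) c" by (rule nonrep_mono[OF cB(2)]) blast
    hence "nonrepetitive (F - S) z"
      by (rule nonrep_cong[rotated]) (simp add: c(2) r_def)
    ultimately show "z \<in> col (F - S)" by (simp add: col_def)
  qed
  have "card B \<le> card (col (F - S))"
    using card_inj_on_le[OF inj img] fincol[of "F - S"] F by blast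
  thus "card {c \<in> PiE (insert e F) L. nonrepetitive F c \<and> map c (take j (path_edges vs)) = map c (drop j (path_edges vs))}
           \<le> N (F - (set (take j (path_edges vs)) - {e}))"
    by (simp add: B_def N_def S_def H_def pe_def)
qed

end


context tc begin

lemma set_vs_V:
  assumes p: "is_path G vs" and G: "G \<subseteq> E" and l: "2 \<le> length vs"
  shows "set vs \<subseteq> V"
proof
  fix x assume "x \<in> set vs"
  then obtain t where t: "t < length vs" "vs ! t = x" unfolding in_set_conv_nth by blast
  have spe: "set (path_edges vs) \<subseteq> E" using p G by (auto simp: is_path_alt)
  show "x \<in> V"
  proof (cases "Suc t < length vs")
    case True
    hence "path_edges vs ! t = {vs ! t, vs ! Suc t}" by (intro pe_nth) simp
    moreover have "path_edges vs ! t \<in> E" using spe True by (intro subsetD[OF spe] nth_mem) simp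
    ultimately have "{vs ! t, vs ! Suc t} \<in> E" by simp
    hence "{vs ! t, vs ! Suc t} \<subseteq> V" using Esub by blast
    thus ?thesis using t by simp
  next
    case False
    hence t1: "Suc (t - 1) = t" "t - 1 < length vs - 1" using t l by auto
    hence "path_edges vs ! (t - 1) = {vs ! (t - 1), vs ! t}" using pe_nth[of "t - 1" vs] by simp
    moreover have "path_edges vs ! (t - 1) \<in> E" using spe t1 by (intro subsetD[OF spe] nth_mem) simp
    ultimately have "{vs ! (t - 1), vs ! t} \<in> E" by simp
    hence "{vs ! (t - 1), vs ! t} \<subseteq> V" using Esub by blast
    thus ?thesis using t by simp
  qed
qed

definition Bv :: "'a set set \<Rightarrow> 'a set \<Rightarrow> nat \<Rightarrow> 'a list \<Rightarrow> ('a set \<Rightarrow> nat) set" where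
  "Bv F e j vs = {c \<in> PiE (insert e F) L. nonrepetitive F c \<and>
      map c (take j (path_edges vs)) = map c (drop j (path_edges vs))}"

lemma Bv_bound_take:
  assumes IH: "\<And>F' e'. F' \<subseteq> E \<Longrightarrow> card F' < card F \<Longrightarrow> e' \<in> E \<Longrightarrow> e' \<notin> F' \<Longrightarrow> \<beta> * real (N F') \<le> real (N (insert e' F'))"
    and F: "F \<subseteq> E" and e: "e \<in> E" "e \<notin> F" and p: "is_path (insert e F) vs"
    and l: "length (path_edges vs) = 2*j" and et: "e \<in> set (take j (path_edges vs))"
  shows "real (card (Bv F e j vs)) * \<beta> ^ (j - 1) \<le> real (N F)"
proof -
  define S where "S = set (take j (path_edges vs)) - {e}"
  have 1: "card (Bv F e j vs) \<le> N (F - S)" using Bvs_card(1)[OF F e p l et] by (simp add: Bv_def S_def)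
  have 2: "card S = j - 1" using Bvs_card(2)[OF F e p l et] by (simp add: S_def)
  have 3: "S \<subseteq> F" using Bvs_card(3)[OF F e p l et] by (simp add: S_def)
  have fF: "finite F" by (rule finite_subset[OF F finE])
  have fS: "finite S" by (rule finite_subset[OF 3 fF])
  have "real (card (Bv F e j vs)) * \<beta> ^ (j - 1) \<le> real (N (F - S)) * \<beta> ^ (j - 1)"
    using 1 beta_pos by (intro mult_right_mono) auto
  also have "\<dots> \<le> real (N F)" using S_lemma[OF IH F fS 3] 2 by simp
  finally show ?thesis .
qed

lemma Bv_rev: "length (path_edges vs) = 2*j \<Longrightarrow> Bv F e j (rev vs) = Bv F e j vs"
proof -
  assume l: "length (path_edges vs) = 2*j"
  have l2: "length (rev (path_edges vs)) = 2*j" using l by simp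
  have key: "map c (take j (rev (path_edges vs))) = map c (drop j (rev (path_edges vs))) \<longleftrightarrow>
        map c (take j (path_edges vs)) = map c (drop j (path_edges vs))" for c :: "'a set \<Rightarrow> nat"
  proof
    assume "map c (take j (rev (path_edges vs))) = map c (drop j (rev (path_edges vs)))"
    from square_rev[OF l2 this] show "map c (take j (path_edges vs)) = map c (drop j (path_edges vs))"
      by (simp only: rev_rev_ident)
  next
    assume "map c (take j (path_edges vs)) = map c (drop j (path_edges vs))"
    from square_rev[OF l this] show "map c (take j (rev (path_edges vs))) = map c (drop j (rev (path_edges vs)))" .
  qed
  show ?thesis unfolding Bv_def pe_rev by (rule Collect_cong) (simp only: key)
qed

lemma Bv_bound:
  assumes IH: "\<And>F' e'. F' \<subseteq> E \<Longrightarrow> card F' < card F \<Longrightarrow> e' \<in> E \<Longrightarrow> e' \<notin> F' \<Longrightarrow> \<beta> * real (N F') \<le> real (N (insert e' F'))"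
    and F: "F \<subseteq> E" and e: "e \<in> E" "e \<notin> F" and p: "is_path (insert e F) vs"
    and l: "length (path_edges vs) = 2*j" and ep: "e \<in> set (path_edges vs)"
  shows "real (card (Bv F e j vs)) * \<beta> ^ (j - 1) \<le> real (N F)"
proof (cases "e \<in> set (take j (path_edges vs))")
  case True
  show ?thesis by (rule Bv_bound_take[OF IH F e p l True])
next
  case False
  have "e \<in> set (drop j (path_edges vs))"
    using ep False by (metis Un_iff append_take_drop_id set_append)
  moreover have "take j (rev (path_edges vs)) = rev (drop j (path_edges vs))"
    using l by (simp add: take_rev)
  ultimately have et: "e \<in> set (take j (path_edges (rev vs)))" by (simp add: pe_rev)
  have p': "is_path (insert e F) (rev vs)" using p by (simp add: is_path_alt pe_rev)
  have l': "length (path_edges (rev vs)) = 2*j" using l by (simp add: pe_rev)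
  show ?thesis using Bv_bound_take[OF IH F e p' l' et] Bv_rev[OF l] by simp
qed

end


context tc begin

lemma cardA:
  assumes F: "F \<subseteq> E" and e: "e \<in> E" "e \<notin> F"
  shows "k * N F \<le> card {c \<in> PiE (insert e F) L. nonrepetitive F c}"
proof -
  define A where "A = {c \<in> PiE (insert e F) L. nonrepetitive F c}"
  define m where "m = (\<lambda>(y::nat, g::'a set \<Rightarrow> nat). g(e := y))"
  have inj: "inj_on m (L e \<times> col F)"
  proof (rule inj_onI)
    fix p q assume p: "p \<in> L e \<times> col F" and q: "q \<in> L e \<times> col F" and pq: "m p = m q"
    obtain y g where pyg: "p = (y, g)" by (cases p)
    obtain y' g' where qyg: "q = (y', g')" by (cases q)
    have g: "g \<in> PiE F L" using p pyg by (simp add: col_def)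
    have g': "g' \<in> PiE F L" using q qyg by (simp add: col_def)
    have eq: "g(e := y) = g'(e := y')" using pq pyg qyg by (simp add: m_def)
    have "y = y'" using fun_cong[OF eq, of e] by simp
    moreover have "g = g'"
    proof
      fix x show "g x = g' x"
      proof (cases "x = e")
        case True
        thus ?thesis using PiE_arb[OF g e(2)] PiE_arb[OF g' e(2)] by simp
      next
        case False
        thus ?thesis using fun_cong[OF eq, of x] by simp
      qed
    qed
    ultimately show "p = q" using pyg qyg by simp
  qed
  have img: "m ` (L e \<times> col F) \<subseteq> A"
  proof
    fix z assume "z \<in> m ` (L e \<times> col F)"
    then obtain y g where yg: "y \<in> L e" "g \<in> col F" "z = g(e := y)" by (auto simp: m_def)
    have zP: "z \<in> PiE (insert e F) L" using yg PiE_fun_upd[of y L e g F] by (simp add: col_def)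
    have "nonrepetitive F g" using yg by (simp add: col_def)
    moreover have "\<And>x. x \<in> F \<Longrightarrow> g x = z x" using yg e(2) by auto
    ultimately have "nonrepetitive F z" using nonrep_cong by blast
    thus "z \<in> A" using zP by (simp add: A_def)
  qed
  have fA: "finite A" unfolding A_def using finPiE[of "insert e F"] F e by simp
  have "card (L e \<times> col F) \<le> card A" by (rule card_inj_on_le[OF inj img fA])
  moreover have "card (L e \<times> col F) = card (L e) * N F" by (simp add: card_cartesian_product N_def)
  moreover have "k \<le> card (L e)" using Lfin e by blast
  ultimately have "k * N F \<le> card A" using mult_le_mono1[of k "card (L e)" "N F"] by linarith
  thus ?thesis by (simp add: A_def)
qed

end


context tc begin

lemma pow_ident:
  assumes j: "1 \<le> j"
  shows "real (2 * j * D ^ (2 * j - 1)) * (x / \<beta> ^ (j - 1)) = 2 * real D * x * (real j * (real D ^ 2 / \<beta>) ^ (j - 1))"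
proof -
  have "2 * j - 1 = Suc (2 * (j - 1))" using j by simp
  hence "real D ^ (2 * j - 1) = real D * (real D ^ 2) ^ (j - 1)" by (simp add: power_mult)
  moreover have "(real D ^ 2 / \<beta>) ^ (j - 1) = (real D ^ 2) ^ (j - 1) / \<beta> ^ (j - 1)" by (simp add: power_divide)
  ultimately show ?thesis by simp
qed

lemma step:
  assumes IH: "\<And>F' e'. F' \<subseteq> E \<Longrightarrow> card F' < card F \<Longrightarrow> e' \<in> E \<Longrightarrow> e' \<notin> F' \<Longrightarrow> \<beta> * real (N F') \<le> real (N (insert e' F'))"
    and F: "F \<subseteq> E" and e: "e \<in> E" "e \<notin> F"
  shows "\<beta> * real (N F) \<le> real (N (insert e F))"
proof -
  have "card e = 2" using Esub[OF e(1)] by simp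
  then obtain u v where uv: "e = {u,v}" "u \<noteq> v" using card_2_iff[THEN iffD1] by blast
  define G where "G = insert e F"
  have GE: "G \<subseteq> E" using F e by (simp add: G_def)
  define A where "A = {c \<in> PiE G L. nonrepetitive F c}"
  have fA: "finite A" unfolding A_def using finPiE[OF GE] by simp
  have GoodA: "col G \<subseteq> A"
  proof
    fix c assume "c \<in> col G"
    hence "c \<in> PiE G L" "nonrepetitive G c" by (simp_all add: col_def)
    moreover have "F \<subseteq> G" by (simp add: G_def subset_insertI)
    ultimately show "c \<in> A" using nonrep_mono by (simp add: A_def) blast
  qed
  define Bad where "Bad = A - col G"
  have fG: "finite (col G)" by (rule finite_subset[OF GoodA fA])
  have cBad: "card Bad = card A - card (col G)" unfolding Bad_def by (rule card_Diff_subset[OF fG GoodA])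
  have cle: "card (col G) \<le> card A" by (rule card_mono[OF fA GoodA])
  have NG: "real (N G) = real (card A) - real (card Bad)" using cBad cle by (simp add: N_def)
  define K where "K = card V"
  define P where "P = (\<lambda>j. paths_at G u v (2*j+1))"
  have nbG: "\<And>x. finite {y. {x,y} \<in> G} \<and> card {y. {x,y} \<in> G} \<le> D" using nb[OF GE] by blast
  have Pfin: "finite (P j) \<and> card (P j) \<le> 2 * j * D ^ (2 * j - 1)" for j
    using paths_at_card[OF nbG, of u v "2*j+1"] by (simp add: P_def)
  have Bvfin: "finite (Bv F e j vs)" for j vs
    using finPiE[OF GE] unfolding Bv_def G_def by simp
  have BadSub: "Bad \<subseteq> (\<Union>j\<in>{1..K}. \<Union>vs\<in>P j. Bv F e j vs)"
  proof
    fix c assume c: "c \<in> Bad"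
    have cP: "c \<in> PiE G L" and cF: "nonrepetitive F c" and cG: "\<not> nonrepetitive G c"
      using c by (simp_all add: Bad_def A_def col_def)
    from cG obtain vs j where pv: "is_path G vs" and j1: "1 \<le> j"
      and lpe: "length (path_edges vs) = 2 * j"
      and sq: "map c (take j (path_edges vs)) = map c (drop j (path_edges vs))"
      unfolding nonrepetitive_def by blast
    have ep: "e \<in> set (path_edges vs)"
    proof (rule ccontr)
      assume ne: "e \<notin> set (path_edges vs)"
      have "set (path_edges vs) \<subseteq> G" using pv by (simp add: is_path_alt)
      hence "set (path_edges vs) \<subseteq> F" using ne by (auto simp: G_def)
      hence "is_path F vs" using pv by (simp add: is_path_alt)
      thus False using cF j1 lpe sq unfolding nonrepetitive_def by blast
    qed
    then obtain i where i: "i < length (path_edges vs)" "path_edges vs ! i = e"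
      unfolding in_set_conv_nth by blast
    have lv: "length vs = 2 * j + 1" using lpe j1 by simp
    have si: "Suc i < length vs" using i by simp
    have "{vs ! i, vs ! Suc i} = {u, v}" using i pe_nth[of i vs] uv by simp
    hence cases: "(vs ! i = u \<and> vs ! Suc i = v) \<or> (vs ! i = v \<and> vs ! Suc i = u)"
      by (simp add: doubleton_eq_iff)
    have "set vs \<subseteq> V" using set_vs_V[OF pv GE] lv j1 by simp
    moreover have "distinct vs" using pv by (simp add: is_path_alt)
    ultimately have "length vs \<le> card V" using finV by (metis card_mono distinct_card)
    hence jK: "j \<in> {1..K}" using lv j1 by (simp add: K_def)
    show "c \<in> (\<Union>j\<in>{1..K}. \<Union>vs\<in>P j. Bv F e j vs)"
    proof (cases "vs ! i = u \<and> vs ! Suc i = v")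
      case True
      have "vs \<in> P j" using pv lv si True by (auto simp: P_def paths_at_def)
      moreover have "c \<in> Bv F e j vs" using cP cF sq by (simp add: Bv_def G_def)
      ultimately show ?thesis using jK by blast
    next
      case False
      hence vu: "vs ! i = v" "vs ! Suc i = u" using cases by blast+
      define i' where "i' = length vs - Suc (Suc i)"
      have si': "Suc i' < length vs" using si by (simp add: i'_def)
      have "rev vs ! i' = vs ! (length vs - Suc i')" using si' by (simp add: rev_nth)
      also have "length vs - Suc i' = Suc i" using si by (simp add: i'_def)
      finally have r1: "rev vs ! i' = u" using vu by simp
      have "rev vs ! Suc i' = vs ! (length vs - Suc (Suc i'))" using si' by (simp add: rev_nth)
      also have "length vs - Suc (Suc i') = i" using si by (simp add: i'_def)
      finally have r2: "rev vs ! Suc i' = v" using vu by simp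
      have pr: "is_path G (rev vs)" using pv by (simp add: is_path_alt pe_rev)
      have "rev vs \<in> P j" using pr lv si' r1 r2 by (auto simp: P_def paths_at_def)
      moreover have "c \<in> Bv F e j vs" using cP cF sq by (simp add: Bv_def G_def)
      hence "c \<in> Bv F e j (rev vs)" using Bv_rev[OF lpe] by simp
      ultimately show ?thesis using jK by blast
    qed
  qed
  have each: "real (card (Bv F e j vs)) \<le> real (N F) / \<beta> ^ (j - 1)" if j: "j \<in> {1..K}" and vs: "vs \<in> P j" for j vs
  proof -
    have pv: "is_path G vs" and lv: "length vs = 2*j+1" and
      ex: "\<exists>i. Suc i < 2*j+1 \<and> vs!i = u \<and> vs!Suc i = v"
      using vs by (simp_all add: P_def paths_at_def)
    then obtain i where i: "Suc i < 2*j+1" "vs!i = u" "vs!Suc i = v" by blast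
    have "path_edges vs ! i = e" using pe_nth[of i vs] i lv uv by simp
    moreover have "i < length (path_edges vs)" using i lv by simp
    ultimately have ep: "e \<in> set (path_edges vs)" using nth_mem by metis
    have lpe: "length (path_edges vs) = 2 * j" using lv by simp
    have pv': "is_path (insert e F) vs" using pv by (simp add: G_def)
    have "real (card (Bv F e j vs)) * \<beta> ^ (j - 1) \<le> real (N F)"
      by (rule Bv_bound[OF IH F e pv' lpe ep])
    thus ?thesis using beta_pos by (simp add: pos_le_divide_eq)
  qed
  define y where "y = real D ^ 2 / \<beta>"
  have y: "0 \<le> y" "y < 1" using bpos beta_pos by (simp_all add: y_def)
  have "card Bad \<le> card (\<Union>j\<in>{1..K}. \<Union>vs\<in>P j. Bv F e j vs)"
    using BadSub Pfin Bvfin by (intro card_mono) auto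
  also have "\<dots> \<le> (\<Sum>j\<in>{1..K}. card (\<Union>vs\<in>P j. Bv F e j vs))" by (rule card_UN_le) simp
  also have "\<dots> \<le> (\<Sum>j\<in>{1..K}. \<Sum>vs\<in>P j. card (Bv F e j vs))"
    using Pfin by (intro sum_mono card_UN_le) blast
  finally have "real (card Bad) \<le> real (\<Sum>j\<in>{1..K}. \<Sum>vs\<in>P j. card (Bv F e j vs))" by linarith
  also have "\<dots> = (\<Sum>j\<in>{1..K}. \<Sum>vs\<in>P j. real (card (Bv F e j vs)))" by simp
  also have "\<dots> \<le> (\<Sum>j\<in>{1..K}. \<Sum>vs\<in>P j. real (N F) / \<beta> ^ (j - 1))"
    using each by (intro sum_mono) blast
  also have "\<dots> = (\<Sum>j\<in>{1..K}. real (card (P j)) * (real (N F) / \<beta> ^ (j - 1)))" by simp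
  also have "\<dots> \<le> (\<Sum>j\<in>{1..K}. real (2 * j * D ^ (2 * j - 1)) * (real (N F) / \<beta> ^ (j - 1)))"
  proof (intro sum_mono mult_right_mono)
    fix j show "real (card (P j)) \<le> real (2 * j * D ^ (2 * j - 1))" using Pfin[of j] by linarith
    show "0 \<le> real (N F) / \<beta> ^ (j - 1)" using beta_pos by simp
  qed
  also have "\<dots> = (\<Sum>j\<in>{1..K}. 2 * real D * real (N F) * (real j * y ^ (j - 1)))"
  proof (rule sum.cong[OF refl])
    fix j assume "j \<in> {1..K}"
    hence "1 \<le> j" by simp
    thus "real (2 * j * D ^ (2 * j - 1)) * (real (N F) / \<beta> ^ (j - 1)) = 2 * real D * real (N F) * (real j * y ^ (j - 1))"
      unfolding y_def by (rule pow_ident)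
  qed
  also have "\<dots> = 2 * real D * real (N F) * (\<Sum>j\<in>{1..K}. real j * y ^ (j - 1))"
    by (simp add: sum_distrib_left)
  also have "\<dots> \<le> 2 * real D * real (N F) * (1 / (1 - y)^2)"
    using sum_jy[OF y, of K] by (intro mult_left_mono) auto
  finally have bad: "real (card Bad) \<le> real (N F) * (2 * real D / (1 - y)^2)" by (simp add: mult.commute mult.left_commute)
  have ka: "real k * real (N F) \<le> real (card A)"
    using cardA[OF F e] by (simp add: A_def G_def) (metis of_nat_le_iff of_nat_mult)
  have "(\<beta> + 2 * real D / (1 - y)^2) * real (N F) \<le> real k * real (N F)"
    using kb by (intro mult_right_mono) (simp_all add: y_def)
  hence "\<beta> * real (N F) \<le> real (card A) - real (card Bad)" using ka bad by (simp add: algebra_simps)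
  thus ?thesis using NG by (simp add: G_def)
qed

end


context tc begin

lemma claim: "F \<subseteq> E \<Longrightarrow> e \<in> E \<Longrightarrow> e \<notin> F \<Longrightarrow> \<beta> * real (N F) \<le> real (N (insert e F))"
proof (induction "card F" arbitrary: F e rule: less_induct)
  case less
  show ?case
  proof (rule step)
    fix F' e' assume "F' \<subseteq> E" "card F' < card F" "e' \<in> E" "e' \<notin> F'"
    thus "\<beta> * real (N F') \<le> real (N (insert e' F'))" using less.hyps by blast
  qed (use less.prems in auto)
qed

lemma col_nonempty: "col E \<noteq> {}"
proof -
  have "real (N (E - E)) * \<beta> ^ card E \<le> real (N E)"
    by (rule S_lemma[OF claim _ finE]) (simp_all)
  moreover have "col {} = {\<lambda>x. undefined}" by (auto simp: col_def nonrep_empty)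
  hence "N (E - E) = 1" by (simp add: N_def)
  ultimately have "\<beta> ^ card E \<le> real (N E)" by simp
  moreover have "0 < \<beta> ^ card E" using beta_pos by simp
  ultimately have "0 < N E" by linarith
  thus ?thesis by (auto simp: N_def)
qed

end

lemma choosable:
  assumes sg: "simple_graph V E" and deg: "\<And>v. v \<in> V \<Longrightarrow> degree E v \<le> D"
    and bpos: "real D ^ 2 < \<beta>" and kb: "\<beta> + 2 * real D / (1 - real D ^ 2 / \<beta>) ^ 2 \<le> real k"
  shows "thue_choosable E k"
  unfolding thue_choosable_def
proof (intro allI impI)
  fix L :: "'a set \<Rightarrow> nat set" assume hL: "\<forall>e\<in>E. infinite (L e) \<or> k \<le> card (L e)"
  have ex: "\<exists>T. T \<subseteq> L e \<and> finite T \<and> card T = k" if e: "e \<in> E" for e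
  proof (cases "finite (L e)")
    case False
    thus ?thesis using infinite_arbitrarily_large[OF False, of k] by blast
  next
    case True
    hence "k \<le> card (L e)" using hL e by blast
    then obtain T where "T \<subseteq> L e" "card T = k" "finite T" by (rule obtain_subset_with_card_n)
    thus ?thesis by blast
  qed
  define L' where "L' = (\<lambda>e. SOME T. T \<subseteq> L e \<and> finite T \<and> card T = k)"
  have L': "L' e \<subseteq> L e \<and> finite (L' e) \<and> card (L' e) = k" if "e \<in> E" for e
    unfolding L'_def by (rule someI_ex[OF ex[OF that]])
  interpret tc V E L' D k \<beta>
  proof
    show "simple_graph V E" by (rule sg)
    show "\<And>v. v \<in> V \<Longrightarrow> degree E v \<le> D" by (rule deg)
    show "\<And>e. e \<in> E \<Longrightarrow> finite (L' e) \<and> k \<le> card (L' e)" using L' by simp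
    show "real D ^ 2 < \<beta>" by (rule bpos)
    show "\<beta> + 2 * real D / (1 - real D ^ 2 / \<beta>) ^ 2 \<le> real k" by (rule kb)
  qed
  obtain c where c: "c \<in> col E" using col_nonempty by blast
  have "\<forall>e\<in>E. c e \<in> L e"
  proof
    fix e assume e: "e \<in> E"
    have "c e \<in> L' e" using c e by (auto simp: col_def PiE_mem)
    thus "c e \<in> L e" using L'[OF e] by blast
  qed
  moreover have "nonrepetitive E c" using c by (simp add: col_def)
  ultimately show "\<exists>c. (\<forall>e\<in>E. c e \<in> L e) \<and> nonrepetitive E c" by blast
qed



lemma two_powr: "(5/2::real) \<le> 2 powr (4/3)"
proof -
  define s :: real where "s = 2 powr (1/3)"
  have s0: "0 < s" by (simp add: s_def)
  have s3: "s ^ 3 = 2" unfolding s_def by (simp add: powr_power)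
  have s4: "2 powr (4/3) = s ^ 4" unfolding s_def by (simp add: powr_power)
  have "5/4 \<le> s"
  proof (rule ccontr)
    assume "\<not> 5/4 \<le> s"
    hence "s < 5/4" by simp
    hence "s ^ 3 < (5/4) ^ 3" using s0 by (intro power_strict_mono) auto
    moreover have "(5/4::real) ^ 3 < 2" by (simp add: power3_eq_cube)
    ultimately show False using s3 by simp
  qed
  moreover have "s ^ 4 = s ^ 3 * s" by (simp add: eval_nat_numeral)
  hence "s ^ 4 = 2 * s" using s3 by simp
  ultimately show ?thesis using s4 by simp
qed

lemma poly_bound:
  fixes t :: real assumes t: "30 \<le> t"
  shows "t^6 / (1 - 3/(2*t)) + 2 * t^3 / (3/(2*t))^2 + 1 \<le> t^6 + 5/2 * t^5"
proof -
  have t0: "0 < t" using t by simp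
  define a where "a = 1 - 3/(2*t)"
  have a0: "0 < a" using t by (simp add: a_def field_simps)
  have e1: "2 * t^3 / (3/(2*t))^2 = 8/9 * t^5" using t0 by (simp add: field_simps power2_eq_square eval_nat_numeral)
  have t4: "2 \<le> t^4"
  proof -
    have "(2::real) ^ 4 \<le> t ^ 4" using t by (intro power_mono) auto
    thus ?thesis by (simp add: eval_nat_numeral)
  qed
  have t54: "t^5 = t * t^4" by (simp add: eval_nat_numeral)
  have t65: "t^6 = t * t^5" by (simp add: eval_nat_numeral)
  have m: "30 * t^4 \<le> t * t^4" using t t4 by (intro mult_right_mono) auto
  have key: "t^6 \<le> (t^6 + 29/18 * t^5 - 1) * a"
  proof -
    have "(t^6 + 29/18 * t^5 - 1) * a = t^6 + 29/18 * t^5 - 1 - 3/(2*t) * (t^6 + 29/18 * t^5 - 1)"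
    proof -
      have g: "X * (1 - c) = X - c * X" for X c :: real by (simp add: algebra_simps)
      show ?thesis unfolding a_def by (rule g)
    qed
    also have "3/(2*t) * (t^6 + 29/18 * t^5 - 1) = 3/2 * t^5 + 29/12 * t^4 - 3/(2*t)"
    proof -
      have "3/(2*t) * t^6 = 3/2 * t^5" unfolding t65 using t0 by simp
      moreover have "3/(2*t) * (29/18 * t^5) = 29/12 * t^4" unfolding t54 using t0 by simp
      ultimately show ?thesis by (simp add: algebra_simps)
    qed
    finally have eq: "(t^6 + 29/18 * t^5 - 1) * a = t^6 + 1/9 * t^5 - 29/12 * t^4 - 1 + 3/(2*t)" by simp
    have "0 \<le> 3/(2*t)" using t0 by simp
    hence "t^6 \<le> t^6 + 1/9 * t^5 - 29/12 * t^4 - 1 + 3/(2*t)" using m t54 t4 by linarith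
    thus ?thesis by (subst eq)
  qed
  have "t^6 / a \<le> t^6 + 29/18 * t^5 - 1" using key a0 by (simp add: pos_divide_le_eq)
  thus ?thesis using e1 by (simp add: a_def)
qed

definition yy :: "nat \<Rightarrow> real" where
  "yy d = (if 30 \<le> real d powr (1/3) then 1 - 3/(2 * real d powr (1/3)) else 1/2)"
definition BB :: "nat \<Rightarrow> real" where
  "BB d = real d ^ 2 / yy d + 2 * real d / (1 - yy d) ^ 2"
definition kk :: "nat \<Rightarrow> nat" where "kk d = nat \<lceil>BB d\<rceil>"
definition ff :: "nat \<Rightarrow> real" where
  "ff d = max 0 (real (kk d) - real d ^ 2 - 2 powr (4/3) * real d powr (5/3))"

lemma yy_bounds: "0 < yy d \<and> yy d < 1"
proof (cases "30 \<le> real d powr (1/3)")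
  case True
  define t where "t = real d powr (1/3)"
  have t: "30 \<le> t" using True by (simp add: t_def)
  have "0 < 3 / (2 * t)" "3 / (2 * t) < 1" using t by (simp_all add: field_simps)
  thus ?thesis using True by (simp add: yy_def t_def)
qed (simp add: yy_def)

lemma kk_choosable:
  assumes sg: "simple_graph V E" and deg: "\<And>v. v \<in> V \<Longrightarrow> degree E v \<le> d" and d: "1 \<le> d"
  shows "thue_choosable E (kk d)"
proof (rule choosable[OF sg deg])
  have y: "0 < yy d" "yy d < 1" using yy_bounds by auto
  have D: "0 < real d ^ 2" using d by simp
  show "real d ^ 2 < real d ^ 2 / yy d" using y D by (simp add: less_divide_eq)
  have "real d ^ 2 / (real d ^ 2 / yy d) = yy d" using D y by (simp add: field_simps)
  hence "real d ^ 2 / yy d + 2 * real d / (1 - real d ^ 2 / (real d ^ 2 / yy d)) ^ 2 = BB d"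
    by (simp add: BB_def)
  also have "\<dots> \<le> real (kk d)" unfolding kk_def by (rule real_nat_ceiling_ge)
  finally show "real d ^ 2 / yy d + 2 * real d / (1 - real d ^ 2 / (real d ^ 2 / yy d)) ^ 2 \<le> real (kk d)" .
qed

lemma ff_eventually: "eventually (\<lambda>d. ff d = 0) at_top"
proof -
  have "ff d = 0" if d: "27000 \<le> d" for d :: nat
  proof -
    define t where "t = real d powr (1/3)"
    have d0: "0 < real d" using d by simp
    have "(27000::real) powr (1/3) = 30"
    proof -
      have "(27000::real) = 30 ^ 3" by simp
      also have "\<dots> = 30 powr 3" by (simp add: powr_realpow[symmetric])
      finally have "(27000::real) powr (1/3) = (30 powr 3) powr (1/3)" by simp
      also have "\<dots> = 30" by (simp add: powr_powr)
      finally show ?thesis .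
    qed
    moreover have "(27000::real) powr (1/3) \<le> real d powr (1/3)" using d by (intro powr_mono2) auto
    ultimately have t30: "30 \<le> t" by (simp add: t_def)
    have t0: "0 < t" using t30 by simp
    have dt: "real d = t ^ 3" unfolding t_def using d0 by (simp add: powr_power)
    have "t ^ 5 = real d powr (real 5 * (1/3))" unfolding t_def using d0 by (intro powr_power) simp
    moreover have e53: "real (5::nat) * (1/3) = (5/3::real)" by simp
    ultimately have d53: "real d powr (5/3) = t ^ 5" by (simp only: e53)
    have yy: "yy d = 1 - 3/(2*t)" using t30 by (simp add: yy_def t_def)
    have BB: "BB d = t^6 / (1 - 3/(2*t)) + 2 * t^3 / (3/(2*t))^2"
      by (simp add: BB_def yy dt flip: power_mult)
    have B0: "0 \<le> BB d" using yy_bounds[of d] by (simp add: BB_def)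
    have "real (kk d) = real_of_int \<lceil>BB d\<rceil>" using B0 by (simp add: kk_def)
    also have "\<dots> \<le> BB d + 1" using ceiling_correct[of "BB d"] by linarith
    also have "\<dots> \<le> t^6 + 5/2 * t^5" unfolding BB by (rule poly_bound[OF t30])
    also have "\<dots> \<le> t^6 + 2 powr (4/3) * t^5"
      using two_powr t0 by (intro add_left_mono mult_right_mono) auto
    also have "\<dots> = real d ^ 2 + 2 powr (4/3) * real d powr (5/3)"
      unfolding d53 by (simp add: dt flip: power_mult)
    finally show ?thesis by (simp add: ff_def)
  qed
  thus ?thesis unfolding eventually_at_top_linorder by blast
qed

theorem theorem6:
  shows "\<exists>f :: nat \<Rightarrow> real. f \<in> O[at_top](\<lambda>d. real d powr (4/3)) \<and>
    (\<forall>(V :: nat set) (E :: nat set set). simple_graph V E \<longrightarrow> max_degree V E \<ge> 3 \<longrightarrow>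
       real (thue_choice_index E) \<le> real (max_degree V E) ^ 2
         + 2 powr (4/3) * real (max_degree V E) powr (5/3) + f (max_degree V E))"
proof (intro exI conjI allI impI)
  show "ff \<in> O[at_top](\<lambda>d. real d powr (4/3))"
  proof (rule bigoI[where c = 1])
    show "eventually (\<lambda>d. norm (ff d) \<le> 1 * norm (real d powr (4/3))) at_top"
      using ff_eventually by (rule eventually_mono) simp
  qed
next
  fix V :: "nat set" and E :: "nat set set"
  assume sg: "simple_graph V E" and m3: "3 \<le> max_degree V E"
  define d where "d = max_degree V E"
  have finV: "finite V" using sg by (simp add: simple_graph_def)
  have deg: "degree E v \<le> d" if "v \<in> V" for v
    unfolding d_def max_degree_def using finV that by (intro Max_ge) auto
  have "thue_choosable E (kk d)" using kk_choosable[OF sg deg] m3 by (simp add: d_def)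
  hence "thue_choice_index E \<le> kk d" unfolding thue_choice_index_def by (rule Least_le)
  hence "real (thue_choice_index E) \<le> real (kk d)" by simp
  also have "\<dots> \<le> real d ^ 2 + 2 powr (4/3) * real d powr (5/3) + ff d" by (simp add: ff_def)
  finally show "real (thue_choice_index E) \<le> real (max_degree V E) ^ 2
         + 2 powr (4/3) * real (max_degree V E) powr (5/3) + ff (max_degree V E)" by (simp add: d_def)
qed


end
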